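(* Let $\Omega=(0,L)^2$ with periodic boundary conditions, $M$ a positive integer, $h=L/M$, $\mathbb{V}_h\cong\mathbb{R}^{M^2}$ the grid functions on the periodic grid $\{(ih,jh):1\le i,j\le M\}$ with maximum norm $\|v\|_\infty=\max|v_{i,j}|$, $\Lambda_h$ the standard five-point central-difference matrix of the Laplacian with periodic boundary conditions, and $\varepsilon>0$. Let $0=t_0<\dots<t_N=T$, $\tau_k=t_k-t_{k-1}$, $r_k=\tau_k/\tau_{k-1}$ for $2\le k\le N$, $r_1:=0$. Let $u^n\in\mathbb{V}_h$ solve $$D_2u^n=\varepsilon^2\Lambda_hu^n-f(u^n),\qquad 1\le n\le N,$$ where $f(u)=u^3-u$ componentwise, $D_2u^1=(u^1-u^0)/\tau_1$ and for $n\ge2$ $D_2u^n=\frac{1+2r_n}{\tau_n(1+r_n)}(u^n-u^{n-1})-\frac{r_n^2}{\tau_n(1+r_n)}(u^{n-1}-u^{n-2})$. Let $r_s\in[1,1+\sqrt2)$ satisfy $0<r_k\le r_s$ for all $2\le k\le N$ (in particular $0<r_k<1+\sqrt2$), set $\eta=\frac{2r_s^2}{(1+r_s)^2}$, and assume $$\tau_n\le\frac{(1+2r_n)\eta-r_n^2}{\eta^2(1+r_n)}\cdot\frac{1-\eta}{2+4\varepsilon^2h^{-2}}\quad\text{for } n\ge1.$$ If $\|u^0\|_\infty\le1$, then $\|u^k\|_\infty\le1$ for $1\le k\le N$. *)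

theory Defs
  imports Complex_Main
begin

text \<open>Grid functions on the periodic M x M grid are functions nat => nat => real,
  indexed by 0 <= i, j < M (index i stands for grid point ((i+1) h, (j+1) h));
  only values with i, j < M are relevant.\<close>

type_synonym grid_fun = "nat \<Rightarrow> nat \<Rightarrow> real"

definition grid_maxnorm :: "nat \<Rightarrow> grid_fun \<Rightarrow> real" where
  "grid_maxnorm M v = Max {\<bar>v i j\<bar> | i j. i < M \<and> j < M}"

definition lap_h :: "nat \<Rightarrow> real \<Rightarrow> grid_fun \<Rightarrow> grid_fun" where
  "lap_h M h v i j =
     (v ((i + 1) mod M) j + v ((i + M - 1) mod M) j
      + v i ((j + 1) mod M) + v i ((j + M - 1) mod M) - 4 * v i j) / h\<^sup>2"

definition cubic_f :: "real \<Rightarrow> real" where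
  "cubic_f u = u ^ 3 - u"

definition step :: "(nat \<Rightarrow> real) \<Rightarrow> nat \<Rightarrow> real" where
  "step t k = t k - t (k - 1)"

definition ratio :: "(nat \<Rightarrow> real) \<Rightarrow> nat \<Rightarrow> real" where
  "ratio t k = (if k \<le> 1 then 0 else step t k / step t (k - 1))"

definition D2 :: "(nat \<Rightarrow> real) \<Rightarrow> (nat \<Rightarrow> grid_fun) \<Rightarrow> nat \<Rightarrow> grid_fun" where
  "D2 t u n i j =
     (if n = 1 then (u 1 i j - u 0 i j) / step t 1
      else (1 + 2 * ratio t n) / (step t n * (1 + ratio t n)) * (u n i j - u (n - 1) i j)
           - (ratio t n)\<^sup>2 / (step t n * (1 + ratio t n)) * (u (n - 1) i j - u (n - 2) i j))"

end

theory Submission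
  imports Defs
begin

lemma point_max:
  fixes \<eta> b0 b1 c x y z lap :: real
  assumes "0<\<eta>" "\<eta><1" "b0>0" "b1\<ge>0" "c = (1-\<eta>)*(b0 - b1/\<eta>)" "c \<ge> 0"
    "y \<le> 1" "b1*(y - \<eta>*z) \<le> b1*(1-\<eta>)"
    "b0*(x-y) - b1*(y-z) = lap - (x^3 - x)" "lap \<le> 0"
  shows "x \<le> 1"
proof (rule ccontr)
  assume "\<not> x \<le> 1" hence x1: "x > 1" by simp
  have e: "b0*(x-y) - b1*(y-z) = b0*(x-\<eta>*y) - (b1/\<eta>)*(y-\<eta>*z) - c*y"
    using assms(1) unfolding assms(5) by (simp add: field_simps)
  have h1: "b0*\<eta>*y \<le> b0*\<eta>" using assms(1,3,7) by simp
  have h2: "(b1/\<eta>)*(y-\<eta>*z) \<le> (b1/\<eta>)*(1-\<eta>)"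
    using divide_right_mono[OF assms(8), of \<eta>] assms(1) by simp
  have h3: "c*y \<le> c" using assms(6,7) by (simp add: mult_left_le)
  have h4: "b0*x - b0*\<eta> - (b1/\<eta>)*(1-\<eta>) - c = b0*(x-1)"
    using assms(1,5) by (simp add: field_simps)
  have "b0*(x-1) > 0" using x1 assms(3) by simp
  hence L: "b0*(x-y) - b1*(y-z) > 0" using e h1 h2 h3 h4 by (simp add: algebra_simps)
  have "x^3 - x = x*((x-1)*(x+1))" by (simp add: algebra_simps power3_eq_cube)
  moreover have "x*((x-1)*(x+1)) > 0" using x1 by simp
  ultimately have "lap - (x^3 - x) < 0" using assms(10) by simp
  thus False using L assms(9) by simp
qed

lemma point_min:
  fixes \<eta> b0 b1 c x y z lap :: real
  assumes "0<\<eta>" "\<eta><1" "b0>0" "b1\<ge>0" "c = (1-\<eta>)*(b0 - b1/\<eta>)" "c \<ge> 0"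
    "y \<ge> -1" "b1*(y - \<eta>*z) \<ge> - b1*(1-\<eta>)"
    "b0*(x-y) - b1*(y-z) = lap - (x^3 - x)" "lap \<ge> 0"
  shows "x \<ge> -1"
proof -
  have "-x \<le> 1"
    apply (rule point_max[of \<eta> b0 b1 c "-y" "-z" "-x" "-lap"])
    using assms by (auto simp: algebra_simps)
  thus ?thesis by simp
qed

lemma cubic_bound:
  fixes K x :: real
  assumes "K \<ge> 2" "\<bar>x\<bar> \<le> 1"
  shows "\<bar>(K+1)*x - x^3\<bar> \<le> K"
proof -
  have a: "K - ((K+1)*x - x^3) = (1-x)*(K - x - x^2)" by (simp add: algebra_simps power2_eq_square power3_eq_cube)
  have b: "K + ((K+1)*x - x^3) = (1+x)*(K + x - x^2)" by (simp add: algebra_simps power2_eq_square power3_eq_cube)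
  have x2: "x^2 \<le> 1" using assms(2) by (simp add: abs_square_le_1)
  have "(1-x)*(K - x - x^2) \<ge> 0" using assms x2 by (intro mult_nonneg_nonneg) auto
  moreover have "(1+x)*(K + x - x^2) \<ge> 0" using assms x2 by (intro mult_nonneg_nonneg) auto
  ultimately show ?thesis using a b by (simp add: abs_le_iff)
qed

lemma point_w:
  fixes \<eta> b0 b1 \<kappa> s x y z a1 a2 a3 a4 :: real
  assumes "0<\<eta>" "\<eta><1" "b0>0" "b1\<ge>0" "\<eta>*\<kappa> = (1-\<eta>)*(b0 - b1/\<eta>)" "\<kappa> \<ge> 2+4*s" "s \<ge> 0"
    "\<bar>x\<bar> \<le> 1" "\<bar>a1\<bar> \<le> 1" "\<bar>a2\<bar> \<le> 1" "\<bar>a3\<bar> \<le> 1" "\<bar>a4\<bar> \<le> 1"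
    "\<bar>b1*(y - \<eta>*z)\<bar> \<le> b1*(1-\<eta>)"
    "b0*(x-y) - b1*(y-z) = s*(a1+a2+a3+a4-4*x) - (x^3 - x)"
  shows "\<bar>x - \<eta>*y\<bar> \<le> 1-\<eta>"
proof -
  have k: "\<kappa> > 0" using assms(6,7) by simp
  have eq: "(b0+\<kappa>)*(x-\<eta>*y) = (b1/\<eta>)*(y-\<eta>*z) + (((\<kappa>-4*s)+1)*x - x^3) + s*(a1+a2+a3+a4)"
  proof -
    have "b0*(x-y) - b1*(y-z) = b0*(x-\<eta>*y) - (b1/\<eta>)*(y-\<eta>*z) - ((1-\<eta>)*(b0 - b1/\<eta>))*y"
      using assms(1) by (simp add: field_simps)
    hence "b0*(x-y) - b1*(y-z) = b0*(x-\<eta>*y) - (b1/\<eta>)*(y-\<eta>*z) - (\<eta>*\<kappa>)*y"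
      unfolding assms(5) .
    thus ?thesis using assms(14) by (simp add: algebra_simps)
  qed
  have c1: "\<bar>((\<kappa>-4*s)+1)*x - x^3\<bar> \<le> \<kappa>-4*s" using cubic_bound assms(6,8) by simp
  have c2: "\<bar>s*(a1+a2+a3+a4)\<bar> \<le> 4*s"
  proof -
    have "\<bar>a1+a2+a3+a4\<bar> \<le> 4" using assms(9-12) by simp
    hence "s * \<bar>a1+a2+a3+a4\<bar> \<le> s * 4" using assms(7) by (rule mult_left_mono)
    thus ?thesis using assms(7) by (simp add: abs_mult)
  qed
  have c3: "\<bar>(b1/\<eta>)*(y-\<eta>*z)\<bar> \<le> (b1/\<eta>)*(1-\<eta>)"
    using assms(1,13) by (simp add: abs_mult field_simps)
  have "\<bar>(b0+\<kappa>)*(x-\<eta>*y)\<bar> \<le> (b1/\<eta>)*(1-\<eta>) + \<kappa>"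
    unfolding eq using c1 c2 c3 by linarith
  also have "\<dots> \<le> (b0+\<kappa>)*(1-\<eta>)"
  proof -
    have "(b1/\<eta>)*(1-\<eta>) + \<eta>*\<kappa> + (1-\<eta>)*\<kappa> = (b0+\<kappa>)*(1-\<eta>)"
      using assms(1,5) by (simp add: field_simps)
    thus ?thesis by (simp add: algebra_simps)
  qed
  finally have "(b0+\<kappa>)*\<bar>x-\<eta>*y\<bar> \<le> (b0+\<kappa>)*(1-\<eta>)" using assms(3) k by (simp add: abs_mult)
  thus ?thesis using assms(3) k by (simp add: mult_le_cancel_left_pos)
qed

lemma grid_ex_max:
  fixes v :: grid_fun
  assumes "M > 0"
  shows "\<exists>i0<M. \<exists>j0<M. \<forall>i<M. \<forall>j<M. v i j \<le> v i0 j0"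
proof -
  let ?S = "(\<lambda>(i,j). v i j) ` ({..<M} \<times> {..<M})"
  have f: "finite ?S" by simp
  have ne: "?S \<noteq> {}" using assms by auto
  have "Max ?S \<in> ?S" using Max_in[OF f ne] .
  then obtain i0 j0 where ij: "i0 < M" "j0 < M" "Max ?S = v i0 j0" by auto
  have "\<forall>i<M. \<forall>j<M. v i j \<le> Max ?S" using f by (auto intro!: Max_ge)
  thus ?thesis using ij by metis
qed

lemma grid_ex_min:
  fixes v :: grid_fun
  assumes "M > 0"
  shows "\<exists>i0<M. \<exists>j0<M. \<forall>i<M. \<forall>j<M. v i0 j0 \<le> v i j"
  using grid_ex_max[OF assms, of "\<lambda>i j. - v i j"] by auto

lemma gset: "{\<bar>v i j\<bar> | i j. i < M \<and> j < M} = (\<lambda>(i,j). \<bar>v i j\<bar>) ` ({..<M} \<times> {..<M})"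
  by auto

lemma grid_le: "i < M \<Longrightarrow> j < M \<Longrightarrow> \<bar>v i j\<bar> \<le> grid_maxnorm M v"
  unfolding grid_maxnorm_def gset by (rule Max_ge) auto

lemma grid_bound: "M > 0 \<Longrightarrow> (\<And>i j. i < M \<Longrightarrow> j < M \<Longrightarrow> \<bar>v i j\<bar> \<le> 1) \<Longrightarrow> grid_maxnorm M v \<le> 1"
  unfolding grid_maxnorm_def gset by (subst Max_le_iff) auto


theorem theorem4p1:
  fixes L \<epsilon> T r\<^sub>s :: real and M N :: nat and t :: "nat \<Rightarrow> real"
    and u :: "nat \<Rightarrow> grid_fun"
  assumes "L > 0" and "M > 0" and "\<epsilon> > 0"
    and "t 0 = 0" and "t N = T"
    and "\<And>k. 1 \<le> k \<Longrightarrow> k \<le> N \<Longrightarrow> t (k - 1) < t k"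
    and scheme: "\<And>n i j. 1 \<le> n \<Longrightarrow> n \<le> N \<Longrightarrow> i < M \<Longrightarrow> j < M \<Longrightarrow>
       D2 t u n i j = \<epsilon>\<^sup>2 * lap_h M (L / real M) (u n) i j - cubic_f (u n i j)"
    and "1 \<le> r\<^sub>s" and "r\<^sub>s < 1 + sqrt 2"
    and "\<And>k. 2 \<le> k \<Longrightarrow> k \<le> N \<Longrightarrow> 0 < ratio t k \<and> ratio t k \<le> r\<^sub>s"
    and "\<And>n. 1 \<le> n \<Longrightarrow> n \<le> N \<Longrightarrow>
       step t n \<le> ((1 + 2 * ratio t n) * (2 * r\<^sub>s\<^sup>2 / (1 + r\<^sub>s)\<^sup>2) - (ratio t n)\<^sup>2)
                    / ((2 * r\<^sub>s\<^sup>2 / (1 + r\<^sub>s)\<^sup>2)\<^sup>2 * (1 + ratio t n))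
                  * ((1 - 2 * r\<^sub>s\<^sup>2 / (1 + r\<^sub>s)\<^sup>2) / (2 + 4 * \<epsilon>\<^sup>2 / (L / real M)\<^sup>2))"
    and "grid_maxnorm M (u 0) \<le> 1"
  shows "\<forall>k. 1 \<le> k \<and> k \<le> N \<longrightarrow> grid_maxnorm M (u k) \<le> 1"
proof -
  define h where "h = L / real M"
  define s where "s = \<epsilon>\<^sup>2 / h\<^sup>2"
  define \<eta> where "\<eta> = 2 * r\<^sub>s\<^sup>2 / (1 + r\<^sub>s)\<^sup>2"
  have hpos: "h > 0" unfolding h_def using assms(1,2) by simp
  have s0: "s \<ge> 0" unfolding s_def by simp
  have eta0: "0 < \<eta>" unfolding \<eta>_def using assms(8) by simp
  have eta1: "\<eta> < 1"
  proof -
    have "(r\<^sub>s - 1)^2 < (sqrt 2)^2"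
      by (rule power_strict_mono) (use assms(8,9) in auto)
    hence "2 * r\<^sub>s\<^sup>2 < (1 + r\<^sub>s)\<^sup>2" by (simp add: power2_eq_square algebra_simps)
    thus ?thesis unfolding \<eta>_def using assms(8) by simp
  qed
  have cond: "step t n \<le> ((1 + 2 * ratio t n) * \<eta> - (ratio t n)\<^sup>2) / (\<eta>\<^sup>2 * (1 + ratio t n))
                  * ((1 - \<eta>) / (2 + 4 * s))" if "1 \<le> n" "n \<le> N" for n
    using assms(11)[OF that] unfolding \<eta>_def s_def h_def by simp
  have lapeq: "\<epsilon>\<^sup>2 * lap_h M (L / real M) v i j =
      s * (v ((i + 1) mod M) j + v ((i + M - 1) mod M) j
      + v i ((j + 1) mod M) + v i ((j + M - 1) mod M) - 4 * v i j)" for v i j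
    unfolding lap_h_def s_def h_def by simp
  have stepf: "\<exists>b0 b1 \<kappa>. b0>0 \<and> b1\<ge>0 \<and> \<eta>*\<kappa> = (1-\<eta>)*(b0-b1/\<eta>) \<and> \<kappa> \<ge> 2+4*s \<and> (n=1 \<longrightarrow> b1=0) \<and>
     (\<forall>i j. D2 t u n i j = b0*(u n i j - u (n-1) i j) - b1*(u (n-1) i j - u (n-2) i j))"
    if n1: "1\<le>n" and nN: "n\<le>N" for n
  proof -
    define tau where "tau = step t n"
    define r where "r = ratio t n"
    have tau0: "tau > 0" unfolding tau_def step_def using assms(6)[OF n1 nN] by simp
    have r0: "r \<ge> 0"
    proof (cases "n = 1")
      case True thus ?thesis unfolding r_def ratio_def by simp
    next
      case False thus ?thesis unfolding r_def using assms(10)[of n] n1 nN by fastforce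
    qed
    define b0 where "b0 = (1 + 2*r)/(tau*(1+r))"
    define b1 where "b1 = r\<^sup>2/(tau*(1+r))"
    define \<kappa> where "\<kappa> = (1-\<eta>)*(b0-b1/\<eta>)/\<eta>"
    define X where "X = ((1 + 2 * r) * \<eta> - r\<^sup>2) / (\<eta>\<^sup>2 * (1 + r))"
    have b00: "b0 > 0" unfolding b0_def using tau0 r0 by simp
    have b10: "b1 \<ge> 0" unfolding b1_def using tau0 r0 by simp
    have ek: "\<eta>*\<kappa> = (1-\<eta>)*(b0-b1/\<eta>)" unfolding \<kappa>_def using eta0 by simp
    have r1: "1 + r \<noteq> 0" using r0 by simp
    have tr: "tau*(1+r) \<noteq> 0" using tau0 r1 by simp
    have bb: "b0 - b1/\<eta> = ((1 + 2 * r) * \<eta> - r\<^sup>2)/(\<eta>*(tau*(1+r)))"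
    proof -
      have gen: "a/D - (c/D)/e = (a*e - c)/(e*D)" if "D \<noteq> 0" "e \<noteq> 0" for a c D e :: real
        using that by (simp add: field_simps)
      show ?thesis unfolding b0_def b1_def using gen[OF tr, of \<eta>] eta0 by simp
    qed
    have kX: "\<kappa> = (1-\<eta>)*X/tau" unfolding \<kappa>_def X_def bb using eta0 tau0 r1
      by (simp add: power2_eq_square)
    have "tau \<le> X * ((1-\<eta>)/(2+4*s))" using cond[OF n1 nN] unfolding tau_def X_def r_def .
    hence "tau * (2+4*s) \<le> (1-\<eta>)*X" using s0 by (simp add: field_simps)
    hence kk: "\<kappa> \<ge> 2+4*s" unfolding kX using tau0 by (simp add: le_divide_eq algebra_simps)
    have b1z: "n=1 \<longrightarrow> b1=0" unfolding b1_def r_def ratio_def by simp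
    have D: "D2 t u n i j = b0*(u n i j - u (n-1) i j) - b1*(u (n-1) i j - u (n-2) i j)" for i j
    proof (cases "n = 1")
      case True thus ?thesis unfolding D2_def b0_def b1_def r_def tau_def ratio_def by simp
    next
      case False thus ?thesis unfolding D2_def b0_def b1_def r_def tau_def by simp
    qed
    show ?thesis using b00 b10 ek kk b1z D by blast
  qed
  define Q where "Q n \<longleftrightarrow> (\<forall>i<M. \<forall>j<M. \<bar>u n i j\<bar> \<le> 1) \<and>
      (1 \<le> n \<longrightarrow> (\<forall>i<M. \<forall>j<M. \<bar>u n i j - \<eta> * u (n-1) i j\<bar> \<le> 1 - \<eta>))" for n
  have main: "n \<le> N \<Longrightarrow> Q n" for n
  proof (induction n)
    case 0
    show ?case unfolding Q_def using grid_le[of _ M _ "u 0"] assms(12) by force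
  next
    case (Suc n)
    let ?m = "Suc n"
    have Qn: "Q n" using Suc by simp
    obtain b0 b1 \<kappa> where b00: "b0>0" and b10: "b1\<ge>0" and ek: "\<eta>*\<kappa> = (1-\<eta>)*(b0-b1/\<eta>)"
      and kk: "\<kappa> \<ge> 2+4*s" and b1z: "?m=1 \<longrightarrow> b1=0"
      and D: "\<And>i j. D2 t u ?m i j = b0*(u ?m i j - u (?m-1) i j) - b1*(u (?m-1) i j - u (?m-2) i j)"
      using stepf[of ?m] Suc.prems by auto
    have c0: "(1-\<eta>)*(b0-b1/\<eta>) \<ge> 0" using ek[symmetric] kk eta0 s0 by simp
    have sch: "b0*(u ?m i j - u n i j) - b1*(u n i j - u (n-1) i j) =
       s * (u ?m ((i + 1) mod M) j + u ?m ((i + M - 1) mod M) j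
      + u ?m i ((j + 1) mod M) + u ?m i ((j + M - 1) mod M) - 4 * u ?m i j) - ((u ?m i j)^3 - u ?m i j)"
      if "i<M" "j<M" for i j
      using scheme[of ?m i j] D[of i j] that Suc.prems lapeq[of "u ?m" i j]
      by (simp add: cubic_f_def numeral_2_eq_2)
    have hw: "\<bar>b1*(u n i j - \<eta>*u (n-1) i j)\<bar> \<le> b1*(1-\<eta>)" if "i<M" "j<M" for i j
    proof (cases "n = 0")
      case True thus ?thesis using b1z by simp
    next
      case False
      hence "\<bar>u n i j - \<eta> * u (n-1) i j\<bar> \<le> 1 - \<eta>" using Qn that unfolding Q_def by simp
      thus ?thesis using b10 by (simp add: abs_mult mult_left_mono)
    qed
    have un: "\<bar>u n i j\<bar> \<le> 1" if "i<M" "j<M" for i j using Qn that unfolding Q_def by simp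
    have idx: "(i + 1) mod M < M" "(i + M - 1) mod M < M" for i using assms(2) by simp_all
    have upper: "u ?m i j \<le> 1" if "i<M" "j<M" for i j
    proof -
      obtain i0 j0 where ij0: "i0<M" "j0<M" and mx: "\<forall>i<M. \<forall>j<M. u ?m i j \<le> u ?m i0 j0"
        using grid_ex_max[OF assms(2), of "u ?m"] by blast
      have nb: "u ?m ((i0 + 1) mod M) j0 + u ?m ((i0 + M - 1) mod M) j0
      + u ?m i0 ((j0 + 1) mod M) + u ?m i0 ((j0 + M - 1) mod M) - 4 * u ?m i0 j0 \<le> 0"
        using mx idx ij0 by (smt (verit))
      have "u ?m i0 j0 \<le> 1"
        apply (rule point_max[where y="u n i0 j0" and z="u (n-1) i0 j0", OF eta0 eta1 b00 b10 refl c0])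
        using un[OF ij0] hw[OF ij0] sch[OF ij0] nb s0
        by (auto simp: abs_le_iff mult_nonneg_nonpos)
      thus ?thesis using mx that by force
    qed
    have lower: "u ?m i j \<ge> -1" if "i<M" "j<M" for i j
    proof -
      obtain i0 j0 where ij0: "i0<M" "j0<M" and mx: "\<forall>i<M. \<forall>j<M. u ?m i0 j0 \<le> u ?m i j"
        using grid_ex_min[OF assms(2), of "u ?m"] by blast
      have nb: "u ?m ((i0 + 1) mod M) j0 + u ?m ((i0 + M - 1) mod M) j0
      + u ?m i0 ((j0 + 1) mod M) + u ?m i0 ((j0 + M - 1) mod M) - 4 * u ?m i0 j0 \<ge> 0"
        using mx idx ij0 by (smt (verit))
      have lnn: "0 \<le> s * (u ?m ((i0 + 1) mod M) j0 + u ?m ((i0 + M - 1) mod M) j0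
      + u ?m i0 ((j0 + 1) mod M) + u ?m i0 ((j0 + M - 1) mod M) - 4 * u ?m i0 j0)"
        using s0 nb by (rule mult_nonneg_nonneg)
      have "u ?m i0 j0 \<ge> -1"
        apply (rule point_min[where y="u n i0 j0" and z="u (n-1) i0 j0", OF eta0 eta1 b00 b10 refl c0 _ _ _ lnn])
        using un[OF ij0] hw[OF ij0] sch[OF ij0] 
        by (auto simp: abs_le_iff)
      thus ?thesis using mx that by force
    qed
    have um: "\<bar>u ?m i j\<bar> \<le> 1" if "i<M" "j<M" for i j
      using upper[OF that] lower[OF that] by simp
    have w: "\<bar>u ?m i j - \<eta> * u (?m-1) i j\<bar> \<le> 1 - \<eta>" if "i<M" "j<M" for i j
      using point_w[OF eta0 eta1 b00 b10 ek kk s0 um[OF that] um[OF idx(1) that(2)] um[OF idx(2) that(2)]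
          um[OF that(1) idx(1)] um[OF that(1) idx(2)] hw[OF that] sch[OF that]] by simp
    show ?case unfolding Q_def using um w by blast
  qed
  show ?thesis
  proof (intro allI impI)
    fix k assume "1 \<le> k \<and> k \<le> N"
    hence "Q k" using main by simp
    thus "grid_maxnorm M (u k) \<le> 1" unfolding Q_def using grid_bound[OF assms(2)] by blast
  qed
qed

end
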